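(* Let $(X_i,\mathbf{x}_m,X_f)$ be an instance of the three-point Dubins path problem, and consider the class of $C_1S_2C_3S_4C_5$ paths with a fixed turning direction ($L$ or $R$) for each curved segment. If there exists a $C_1S_2C_3S_4C_5$ path in this class in which $S_2$ and $S_4$ are parallel and intersecting (i.e., lie on a common line), then this path is the shortest path in the class.
   Context: A Dubins vehicle moves forward in the plane with unit speed and minimum turning radius $R_{\min}$: $\dot x=\cos\alpha$, $\dot y=\sin\alpha$, $\dot\alpha=u$, $|u|\le 1/R_{\min}$. A configuration is $X=(\mathbf{x},\alpha)$. The three-point Dubins path problem: given configurations $X_i$, $X_f$ and a midpoint $\mathbf{x}_m$ (pairwise distances among the three points at least $4R_{\min}$), find a heading at $\mathbf{x}_m$ minimizing the length of the Dubins path from $X_i$ through $\mathbf{x}_m$ to $X_f$. A path of type $C_1S_2C_3S_4C_5$ from $X_i$ via $\mathbf{x}_m$ to $X_f$ consists of minimum-radius arcs $C_1$ (starting at $X_i$), $C_3$ (passing through $\mathbf{x}_m$), $C_5$ (ending at $X_f$), each a left ($L$) or right ($R$) turn, connected by straight segments $S_2$ and $S_4$; the heading at $\mathbf{x}_m$ is free. *)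

theory Defs
  imports "HOL-Analysis.Analysis"
begin

text \<open>Planar points are pairs of reals; a configuration is a point with a heading angle.\<close>

type_synonym point = "real \<times> real"
type_synonym config = "point \<times> real"

datatype turn = Lt | Rt

fun tsign :: "turn \<Rightarrow> real" where
  "tsign Lt = 1"
| "tsign Rt = -1"

text \<open>Configuration reached after following a minimum-radius arc of radius r,
  turning direction d, arc length l (Dubins kinematics with unit speed).\<close>
definition arc :: "real \<Rightarrow> turn \<Rightarrow> real \<Rightarrow> config \<Rightarrow> config" where
  "arc r d l X = (let x = fst (fst X); y = snd (fst X); a = snd X; s = tsign d;
                     a' = a + s * l / r
                  in ((x + s * r * (sin a' - sin a), y - s * r * (cos a' - cos a)), a'))"

definition straight :: "real \<Rightarrow> config \<Rightarrow> config" where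
  "straight l X = ((fst (fst X) + l * cos (snd X), snd (fst X) + l * sin (snd X)), snd X)"

definition conf_eq :: "config \<Rightarrow> config \<Rightarrow> bool" where
  "conf_eq X Y \<longleftrightarrow> fst X = fst Y \<and> (\<exists>k::int. snd X = snd Y + 2 * pi * of_int k)"

definition dubins3_instance :: "real \<Rightarrow> config \<Rightarrow> point \<Rightarrow> config \<Rightarrow> bool" where
  "dubins3_instance r Xi xm Xf \<longleftrightarrow> r > 0 \<and>
     dist (fst Xi) xm \<ge> 4 * r \<and> dist xm (fst Xf) \<ge> 4 * r \<and> dist (fst Xi) (fst Xf) \<ge> 4 * r"

text \<open>A C1 S2 C3 S4 C5 path with turning directions d1 d3 d5 from Xi via xm to Xf,
  described by its segment lengths: l1 (arc C1), s2 (segment S2), l3a and l3b (the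
  parts of arc C3 before and after xm), s4 (segment S4), l5 (arc C5).\<close>
definition CSCSC_path ::
  "real \<Rightarrow> turn \<Rightarrow> turn \<Rightarrow> turn \<Rightarrow> config \<Rightarrow> point \<Rightarrow> config \<Rightarrow>
   real \<Rightarrow> real \<Rightarrow> real \<Rightarrow> real \<Rightarrow> real \<Rightarrow> real \<Rightarrow> bool" where
  "CSCSC_path r d1 d3 d5 Xi xm Xf l1 s2 l3a l3b s4 l5 \<longleftrightarrow>
     0 \<le> l1 \<and> l1 < 2 * pi * r \<and> 0 \<le> s2 \<and> 0 \<le> l3a \<and> 0 \<le> l3b \<and> l3a + l3b < 2 * pi * r \<and>
     0 \<le> s4 \<and> 0 \<le> l5 \<and> l5 < 2 * pi * r \<and>
     (let P1 = arc r d1 l1 Xi; P2 = straight s2 P1; Pm = arc r d3 l3a P2;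
          P3 = arc r d3 l3b Pm; P4 = straight s4 P3; P5 = arc r d5 l5 P4
      in fst Pm = xm \<and> conf_eq P5 Xf)"

definition CSCSC_length :: "real \<Rightarrow> real \<Rightarrow> real \<Rightarrow> real \<Rightarrow> real \<Rightarrow> real \<Rightarrow> real" where
  "CSCSC_length l1 s2 l3a l3b s4 l5 = l1 + s2 + l3a + l3b + s4 + l5"

text \<open>S2 (starting at configuration P1 = end of C1) and S4 (starting at P3 = end of C3)
  are parallel and lie on a common line: their directions are parallel and the start
  of S4 lies on the line carrying S2.\<close>
definition S2_S4_collinear ::
  "real \<Rightarrow> turn \<Rightarrow> turn \<Rightarrow> config \<Rightarrow> real \<Rightarrow> real \<Rightarrow> real \<Rightarrow> real \<Rightarrow> bool" where
  "S2_S4_collinear r d1 d3 Xi l1 s2 l3a l3b \<longleftrightarrow>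
     (let P1 = arc r d1 l1 Xi; P3 = arc r d3 l3b (arc r d3 l3a (straight s2 P1));
          a2 = snd P1; a4 = snd P3
      in sin (a4 - a2) = 0 \<and>
         (fst (fst P3) - fst (fst P1)) * sin a2 - (snd (fst P3) - snd (fst P1)) * cos a2 = 0)"

end

theory Submission
  imports Defs
begin


lemma unit_bounds:
  fixes x y :: real assumes "x^2 + y^2 = 1"
  shows "-1 \<le> x" "x \<le> 1" "-1 \<le> y" "y \<le> 1"
proof -
  have "x^2 \<le> 1" "y^2 \<le> 1" using assms zero_le_power2[of x] zero_le_power2[of y] by linarith+
  then have "\<bar>x\<bar> \<le> 1" "\<bar>y\<bar> \<le> 1" by (simp_all add: abs_square_le_1)
  then show "-1 \<le> x" "x \<le> 1" "-1 \<le> y" "y \<le> 1" by linarith+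
qed

lemma pos_factor_le: fixes a b :: real shows "b > 0 \<Longrightarrow> 0 \<le> a*b \<Longrightarrow> 0 \<le> a"
  by (simp add: zero_le_mult_iff)
lemma pos_factor_less: fixes a b :: real shows "b > 0 \<Longrightarrow> 0 < a*b \<Longrightarrow> 0 < a"
  by (simp add: zero_less_mult_iff)
lemma pos_factor_neg: fixes a b :: real shows "b > 0 \<Longrightarrow> a*b < 0 \<Longrightarrow> a < 0"
  by (simp add: mult_less_0_iff)

lemma core_p1:
  fixes r w t \<sigma> c yA xA :: real
  assumes r: "r > 0" and w: "w > 2*r" and t: "t \<ge> 0" and u: "\<sigma>^2 + c^2 = 1" and v: "yA^2 + xA^2 = 1"
    and e1: "t*yA = w*\<sigma> - r + r*c" and e2: "t*xA = w*c - r*\<sigma>"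
  shows "t > 0" "t*(yA*c - xA*\<sigma>) = r*(1-c)"
proof -
  have "t^2 = (t*yA)^2 + (t*xA)^2" using v by algebra
  also have "\<dots> = w^2 - 2*r*w*\<sigma> + 2*r^2*(1-c)" unfolding e1 e2 using u by algebra
  finally have tt: "t^2 = w^2 - 2*r*w*\<sigma> + 2*r^2*(1-c)" .
  have "\<sigma> \<le> 1" "c \<le> 1" using unit_bounds[OF u] by auto
  have "t^2 > 0"
  proof -
    have "w^2 - 2*r*w*\<sigma> \<ge> w^2 - 2*r*w" using \<open>\<sigma> \<le> 1\<close> r w by (simp add: mult_left_le)
    moreover have "w^2 - 2*r*w > 0" using r w by (simp add: power2_eq_square)
    moreover have "2*r^2*(1-c) \<ge> 0" using \<open>c \<le> 1\<close> by simp
    ultimately show ?thesis unfolding tt by linarith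
  qed
  then show "t > 0" using t by (cases "t = 0") auto
  show "t*(yA*c - xA*\<sigma>) = r*(1-c)"
    using e1 e2 u by algebra
qed

lemma core_m1:
  fixes r w t \<sigma> c yA xA :: real
  assumes r: "r > 0" and w: "w > 2*r" and t: "t \<ge> 0" and u: "\<sigma>^2 + c^2 = 1" and v: "yA^2 + xA^2 = 1"
    and e1: "t*yA - 2*r*xA = w*\<sigma> - r - r*c" and e2: "t*xA + 2*r*yA = w*c + r*\<sigma>"
  shows "yA*c - xA*\<sigma> \<ge> 0" "c = -1 \<Longrightarrow> yA*c - xA*\<sigma> > 0" "\<sigma> < 0 \<Longrightarrow> yA < 0"
    "\<sigma> = 0 \<Longrightarrow> c = 1 \<Longrightarrow> yA = 0 \<and> xA = 1 \<and> t = w"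
proof -
  have b: "-1 \<le> \<sigma>" "\<sigma> \<le> 1" "-1 \<le> c" "c \<le> 1" using unit_bounds[OF u] by auto
  have "t^2 + 4*r^2 = (t*yA - 2*r*xA)^2 + (t*xA + 2*r*yA)^2" using v by algebra
  also have "\<dots> = w^2 - 2*w*r*\<sigma> + 2*r^2*(1+c)" unfolding e1 e2 using u by algebra
  finally have tt: "t^2 = w^2 - 2*w*r*\<sigma> - 2*r^2*(1-c)" by algebra
  have D: "t^2 + 4*r^2 > 0" using r by (simp add: add_nonneg_pos)
  have Z: "(yA*c - xA*\<sigma>) * (t^2 + 4*r^2) = 2*r*(w - r*\<sigma>) - t*r*(1+c)"
  proof -
    have "(yA*c - xA*\<sigma>) * (t^2 + 4*r^2) = t*((t*yA - 2*r*xA)*c - (t*xA + 2*r*yA)*\<sigma>) + 2*r*((t*yA - 2*r*xA)*\<sigma> + (t*xA + 2*r*yA)*c)"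
      by (simp add: algebra_simps power2_eq_square)
    also have "\<dots> = t*((w*\<sigma> - r - r*c)*c - (w*c + r*\<sigma>)*\<sigma>) + 2*r*((w*\<sigma> - r - r*c)*\<sigma> + (w*c + r*\<sigma>)*c)"
      unfolding e1 e2 ..
    also have "\<dots> = t*(-r*c - r*(\<sigma>^2+c^2)) + 2*r*(w*(\<sigma>^2+c^2) - r*\<sigma>)"
      by (simp add: algebra_simps power2_eq_square)
    finally show ?thesis unfolding u by (simp add: algebra_simps)
  qed
  have Y: "yA * (t^2 + 4*r^2) = t*(w*\<sigma> - r - r*c) + 2*r*(w*c + r*\<sigma>)"
  proof -
    have "yA * (t^2 + 4*r^2) = t*(t*yA - 2*r*xA) + 2*r*(t*xA + 2*r*yA)"
      by (simp add: algebra_simps power2_eq_square)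
    then show ?thesis unfolding e1 e2 .
  qed
  have wr: "w - r*\<sigma> > 0"
  proof -
    have "r*\<sigma> \<le> r*1" using b r by (intro mult_left_mono) auto
    then show ?thesis using w r by linarith
  qed
  have "t^2 \<le> (w - r*\<sigma>)^2"
  proof -
    have "(w - r*\<sigma>)^2 - t^2 = r^2*\<sigma>^2 + 2*r^2*(1-c)" unfolding tt by (simp add: power2_eq_square algebra_simps)
    moreover have "r^2*\<sigma>^2 + 2*r^2*(1-c) \<ge> 0" using b by simp
    ultimately show ?thesis by linarith
  qed
  hence tw: "t \<le> w - r*\<sigma>" using power2_le_imp_le wr by (metis less_imp_le)
  have "t*(1+c) \<le> 2*(w - r*\<sigma>)"
  proof -
    have "t*(1+c) \<le> t*2" using t b by (intro mult_left_mono) auto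
    moreover have "t*2 \<le> 2*(w - r*\<sigma>)" using tw by simp
    ultimately show ?thesis by (rule order.trans)
  qed
  hence "r*(t*(1+c)) \<le> r*(2*(w - r*\<sigma>))" using r by (intro mult_left_mono) auto
  hence "2*r*(w - r*\<sigma>) - t*r*(1+c) \<ge> 0" by (simp add: algebra_simps)
  then show "yA*c - xA*\<sigma> \<ge> 0" using Z D pos_factor_le by metis
  show "yA*c - xA*\<sigma> > 0" if "c = -1"
  proof -
    have "2*r*(w - r*\<sigma>) - t*r*(1+c) > 0" using that wr r by simp
    then show ?thesis using Z D pos_factor_less by metis
  qed
  show "yA < 0" if sg: "\<sigma> < 0"
  proof -
    have "w*\<sigma> < 0" using sg w r by (simp add: mult_pos_neg)
    moreover have "r*(-1) \<le> r*c" using b r by (intro mult_left_mono) auto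
    ultimately have X: "w*\<sigma> - r - r*c < 0" by linarith
    have "t^2 > 0"
    proof -
      have "- 2*w*r*\<sigma> > 0" using sg w r by (simp add: mult_pos_neg mult_neg_pos)
      moreover have "w^2 - 4*r^2 > 0"
      proof -
        have "(2*r)*(2*r) < w*w" using w r by (intro mult_strict_mono) auto
        then show ?thesis by (simp add: power2_eq_square)
      qed
      moreover have "(2*r^2)*(1-c) \<le> (2*r^2)*2" using b by (intro mult_left_mono) auto
      hence "2*r^2*(1-c) \<le> 4*r^2" by simp
      ultimately show ?thesis unfolding tt by linarith
    qed
    hence tp: "t > 0" using t by (cases "t = 0") auto
    have "t*(w*\<sigma> - r - r*c) + 2*r*(w*c + r*\<sigma>) < 0"
    proof (cases "w*c + r*\<sigma> \<le> 0")
      case True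
      have "t*(w*\<sigma> - r - r*c) < 0" using X tp by (simp add: mult_pos_neg)
      moreover have "2*r*(w*c + r*\<sigma>) \<le> 0" using True r by (simp add: mult_nonneg_nonpos)
      ultimately show ?thesis by linarith
    next
      case False
      hence Yp: "w*c + r*\<sigma> > 0" by simp
      have cp: "c > 0"
      proof (rule ccontr)
        assume "\<not> c > 0" hence "w*c \<le> 0" using w r by (simp add: mult_nonneg_nonpos)
        moreover have "r*\<sigma> < 0" using sg r by (simp add: mult_pos_neg)
        ultimately show False using Yp by linarith
      qed
      have "1 - c \<le> \<sigma>^2"
      proof -
        have "c^2 \<le> c" using cp b by (simp add: power2_eq_square mult_left_le)
        then show ?thesis using u by linarith
      qed
      also have "\<sigma>^2 \<le> -\<sigma>"
      proof -
        have "(-\<sigma>)*(-\<sigma>) \<le> 1*(-\<sigma>)" using sg b by (intro mult_right_mono) auto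
        then show ?thesis by (simp add: power2_eq_square)
      qed
      finally have "r*(1-c) \<le> r*(-\<sigma>)" using r by (intro mult_left_mono) auto
      moreover have "r*(-\<sigma>) < w*(-\<sigma>)" using sg w r by simp
      ultimately have "r - r*c < - (w*\<sigma>)" by (simp add: algebra_simps)
      hence "-(w*\<sigma> - r - r*c) > 2*r" by linarith
      hence "(2*r)*(2*r) < (-(w*\<sigma> - r - r*c))*(-(w*\<sigma> - r - r*c))" using r by (intro mult_strict_mono) auto
      hence "(2*r)^2 < (-(w*\<sigma> - r - r*c))^2" by (simp only: power2_eq_square)
      hence X2: "(w*\<sigma> - r - r*c)^2 > 4*r^2" by (simp only: power2_minus power_mult_distrib) simp
      let ?X = "w*\<sigma> - r - r*c" and ?Y = "w*c + r*\<sigma>"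
      have "t^2 = ?X^2 + ?Y^2 - 4*r^2" using tt u by algebra
      hence "t^2 * ?X^2 - 4*r^2 * ?Y^2 = (?X^2 - 4*r^2)*(?X^2 + ?Y^2)" by algebra
      moreover have "(?X^2 - 4*r^2)*(?X^2 + ?Y^2) > 0" using X2 zero_le_power2[of "?Y"] zero_le_power2[of r] by (intro mult_pos_pos) linarith+
      ultimately have "t^2 * ?X^2 > 4*r^2*?Y^2" by linarith
      moreover have "(t * (-?X))^2 = t^2 * ?X^2" by (simp only: power_mult_distrib power2_minus)
      moreover have "(2*r*?Y)^2 = 4*r^2*?Y^2" by (simp add: power_mult_distrib)
      ultimately have "(t * (-?X))^2 > (2*r*?Y)^2" by linarith
      moreover have "t*(-?X) \<ge> 0" using tp X by simp
      ultimately have "t*(-?X) > 2*r*?Y" using power_less_imp_less_base by blast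
      then show ?thesis by linarith
    qed
    then show ?thesis using Y D pos_factor_neg by metis
  qed
  show "yA = 0 \<and> xA = 1 \<and> t = w" if "\<sigma> = 0" "c = 1"
  proof -
    have "t^2 = w^2" using tt that by simp
    hence tw': "t = w" using t w r by (simp add: power2_eq_iff_nonneg)
    have "yA * (t^2 + 4*r^2) = 0" using Y that tw' by (simp add: algebra_simps)
    hence "yA = 0" using D by simp
    moreover have "xA = 1" using e2 that tw' \<open>yA = 0\<close> w r by simp
    ultimately show ?thesis using tw' by simp
  qed
qed

lemma core:
  fixes r w t \<sigma> c yA xA p :: real
  assumes r: "r > 0" and w: "w > 2*r" and t: "t \<ge> 0" and u: "\<sigma>^2 + c^2 = 1" and v: "yA^2 + xA^2 = 1"
    and p: "p = 1 \<or> p = -1"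
    and e1: "t*yA - (1-p)*r*xA = w*\<sigma> - r + p*r*c" and e2: "t*xA + (1-p)*r*yA = w*c - p*r*\<sigma>"
  shows "yA*c - xA*\<sigma> \<ge> 0" "c = -1 \<Longrightarrow> yA*c - xA*\<sigma> > 0" "\<sigma> < 0 \<Longrightarrow> yA < 0"
    "\<sigma> = 0 \<Longrightarrow> c = 1 \<Longrightarrow> yA = 0 \<and> xA = 1 \<and> t = w"
proof -
  have b: "-1 \<le> \<sigma>" "\<sigma> \<le> 1" "-1 \<le> c" "c \<le> 1" using unit_bounds[OF u] by auto
  have "(yA*c - xA*\<sigma> \<ge> 0) \<and> (c = -1 \<longrightarrow> yA*c - xA*\<sigma> > 0) \<and> (\<sigma> < 0 \<longrightarrow> yA < 0) \<and>
    (\<sigma> = 0 \<longrightarrow> c = 1 \<longrightarrow> yA = 0 \<and> xA = 1 \<and> t = w)"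
  proof (cases "p = 1")
    case True
    have f1: "t*yA = w*\<sigma> - r + r*c" using e1 True by simp
    have f2: "t*xA = w*c - r*\<sigma>" using e2 True by simp
    note cp = core_p1[OF r w t u v f1 f2]
    have i: "yA*c - xA*\<sigma> \<ge> 0"
    proof -
      have "0 \<le> (yA*c - xA*\<sigma>) * t" using cp(2) b r by (simp add: mult.commute)
      then show ?thesis using cp(1) pos_factor_le by blast
    qed
    have ii: "yA*c - xA*\<sigma> > 0" if "c = -1"
    proof -
      have "0 < (yA*c - xA*\<sigma>) * t" using cp(2) that r by (simp add: mult.commute)
      then show ?thesis using cp(1) pos_factor_less by blast
    qed
    have iii: "yA < 0" if "\<sigma> < 0"
    proof -
      have "w*\<sigma> < 0" using that w r by (simp add: mult_pos_neg)
      moreover have "r*c \<le> r*1" using b r by (intro mult_left_mono) auto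
      ultimately have "yA * t < 0" using f1 by (simp add: mult.commute)
      then show ?thesis using cp(1) pos_factor_neg by blast
    qed
    have iv: "yA = 0 \<and> xA = 1 \<and> t = w" if "\<sigma> = 0" "c = 1"
    proof -
      have "t*yA = 0" using f1 that by simp
      hence y0: "yA = 0" using cp(1) by simp
      hence "xA^2 = 1" using v by simp
      hence "xA = 1 \<or> xA = -1" by (simp add: power2_eq_1_iff)
      moreover have "t*xA = w" using f2 that by simp
      ultimately have "xA = 1" using cp(1) w r by (auto simp: mult_pos_neg)
      then show ?thesis using y0 \<open>t*xA = w\<close> by simp
    qed
    show ?thesis using i ii iii iv by blast
  next
    case False
    hence pm: "p = -1" using p by simp
    have f1: "t*yA - 2*r*xA = w*\<sigma> - r - r*c" using e1 pm by simp
    have f2: "t*xA + 2*r*yA = w*c + r*\<sigma>" using e2 pm by simp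
    note cm = core_m1[OF r w t u v f1 f2]
    show ?thesis using cm by blast
  qed
  then show "yA*c - xA*\<sigma> \<ge> 0" "c = -1 \<Longrightarrow> yA*c - xA*\<sigma> > 0" "\<sigma> < 0 \<Longrightarrow> yA < 0"
    "\<sigma> = 0 \<Longrightarrow> c = 1 \<Longrightarrow> yA = 0 \<and> xA = 1 \<and> t = w" by blast+
qed

lemma sin_neg_range: fixes x :: real shows "-pi < x \<Longrightarrow> x < 0 \<Longrightarrow> sin x < 0"
  using sin_gt_zero[of "-x"] by simp
lemma sin_neg_range2: fixes x :: real shows "pi < x \<Longrightarrow> x < 2*pi \<Longrightarrow> sin x < 0"
  using sin_gt_zero[of "x - pi"] by (simp add: sin_diff)

lemma angle_final:
  fixes \<alpha> \<beta> \<eta> :: real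
  assumes a: "0 \<le> \<alpha>" and b: "0 \<le> \<beta>" and ab: "\<alpha> + \<beta> < 2*pi" and e0: "0 \<le> \<eta>" and e1: "\<eta> < 2*pi"
    and A1: "sin (\<alpha> - \<eta>) \<ge> 0" and A2: "sin (\<beta> + \<eta>) \<ge> 0"
    and A3: "sin \<eta> < 0 \<Longrightarrow> sin \<alpha> < 0" and A4: "sin \<eta> > 0 \<Longrightarrow> sin \<beta> < 0"
    and A5: "cos \<eta> = -1 \<Longrightarrow> sin (\<alpha> - \<eta>) > 0 \<and> sin (\<beta> + \<eta>) > 0"
  shows "\<eta> = 0"
proof (rule ccontr)
  assume nz: "\<eta> \<noteq> 0"
  have geA: "\<alpha> \<ge> \<eta>" if "\<alpha> - \<eta> > -pi"
  proof (rule ccontr)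
    assume "\<not> \<alpha> \<ge> \<eta>"
    then have "sin (\<alpha> - \<eta>) < 0" using that by (intro sin_neg_range) auto
    then show False using A1 by simp
  qed
  have geB: "\<beta> + \<eta> \<ge> 2*pi" if "\<beta> + \<eta> > pi"
  proof (rule ccontr)
    assume "\<not> \<beta> + \<eta> \<ge> 2*pi"
    then have "sin (\<beta> + \<eta>) < 0" using that by (intro sin_neg_range2) auto
    then show False using A2 by simp
  qed
  consider "\<eta> < pi" | "\<eta> = pi" | "\<eta> > pi" by linarith
  then show False
  proof cases
    case 1
    have "sin \<eta> > 0" using 1 nz e0 by (intro sin_gt_zero) auto
    hence "sin \<beta> < 0" by (rule A4)
    hence "\<beta> > pi" using b sin_ge_zero[of \<beta>] by (cases "\<beta> \<le> pi") auto
    hence "\<alpha> < pi" using ab by simp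
    have "\<alpha> \<ge> \<eta>" using geA \<open>\<alpha> < pi\<close> a 1 e0 by linarith
    moreover have "\<beta> + \<eta> \<ge> 2*pi" using geB \<open>\<beta> > pi\<close> e0 by linarith
    ultimately show False using ab by linarith
  next
    case 2
    have "sin (\<alpha> - \<eta>) > 0" "sin (\<beta> + \<eta>) > 0" using A5 2 by auto
    hence "sin \<alpha> < 0" "sin \<beta> < 0" using 2 by (simp_all add: sin_diff sin_add)
    hence "\<alpha> > pi" "\<beta> > pi" using a b sin_ge_zero[of \<alpha>] sin_ge_zero[of \<beta>]
      by (cases "\<alpha> \<le> pi"; cases "\<beta> \<le> pi"; auto)+
    then show False using ab by linarith
  next
    case 3
    have "sin \<eta> < 0" using 3 e1 by (intro sin_neg_range2) auto
    hence "sin \<alpha> < 0" by (rule A3)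
    hence "\<alpha> > pi" using a sin_ge_zero[of \<alpha>] by (cases "\<alpha> \<le> pi") auto
    hence "\<beta> < pi" using ab by simp
    have "\<alpha> \<ge> \<eta>" using geA \<open>\<alpha> > pi\<close> ab b e1 by linarith
    moreover have "\<beta> + \<eta> \<ge> 2*pi" using geB 3 b by linarith
    ultimately show False using ab by linarith
  qed
qed



lemma arc_x: "fst (fst (arc r d l X)) = fst (fst X) + tsign d * r * (sin (snd X + tsign d * l / r) - sin (snd X))"
  by (simp add: arc_def Let_def)
lemma arc_y: "snd (fst (arc r d l X)) = snd (fst X) - tsign d * r * (cos (snd X + tsign d * l / r) - cos (snd X))"
  by (simp add: arc_def Let_def)
lemma arc_a: "snd (arc r d l X) = snd X + tsign d * l / r"
  by (simp add: arc_def Let_def)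
lemma straight_x: "fst (fst (straight l X)) = fst (fst X) + l * cos (snd X)"
  by (simp add: straight_def)
lemma straight_y: "snd (fst (straight l X)) = snd (fst X) + l * sin (snd X)"
  by (simp add: straight_def)
lemma straight_a: "snd (straight l X) = snd X"
  by (simp add: straight_def)
lemmas pos_simps = arc_x arc_y arc_a straight_x straight_y straight_a

lemma tsign_cases: "tsign d = 1 \<or> tsign d = -1"
  by (cases d) auto

lemma path_eqs:
  assumes P: "CSCSC_path r d1 d3 d5 Xi xm Xf l1 s2 l3a l3b s4 l5"
  defines "\<phi>2 \<equiv> snd Xi + tsign d1 * l1 / r"
    and "h \<equiv> snd Xi + tsign d1 * l1 / r + tsign d3 * l3a / r"
    and "\<phi>4 \<equiv> snd Xi + tsign d1 * l1 / r + tsign d3 * l3a / r + tsign d3 * l3b / r"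
  shows "fst xm = fst (fst Xi) + tsign d1*r*(sin \<phi>2 - sin (snd Xi)) + s2*cos \<phi>2 + tsign d3*r*(sin h - sin \<phi>2)"
    "snd xm = snd (fst Xi) - tsign d1*r*(cos \<phi>2 - cos (snd Xi)) + s2* sin \<phi>2 - tsign d3*r*(cos h - cos \<phi>2)"
    "fst (fst Xf) = fst xm + tsign d3*r*(sin \<phi>4 - sin h) + s4*cos \<phi>4 + tsign d5*r*(sin (snd Xf) - sin \<phi>4)"
    "snd (fst Xf) = snd xm - tsign d3*r*(cos \<phi>4 - cos h) + s4* sin \<phi>4 - tsign d5*r*(cos (snd Xf) - cos \<phi>4)"
    "\<exists>k::int. \<phi>4 + tsign d5*l5/r = snd Xf + 2*pi*k"
proof -
  let ?P1 = "arc r d1 l1 Xi" let ?P2 = "straight s2 ?P1" let ?Pm = "arc r d3 l3a ?P2"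
  let ?P3 = "arc r d3 l3b ?Pm" let ?P4 = "straight s4 ?P3" let ?P5 = "arc r d5 l5 ?P4"
  have pm: "fst ?Pm = xm" and ce: "conf_eq ?P5 Xf" using P unfolding CSCSC_path_def Let_def by auto
  have a2: "snd ?P2 = \<phi>2" unfolding \<phi>2_def by (simp add: pos_simps)
  have ah: "snd ?Pm = h" unfolding h_def by (simp add: pos_simps)
  have a4: "snd ?P4 = \<phi>4" unfolding \<phi>4_def by (simp add: pos_simps)
  have xmx: "fst xm = fst (fst ?Pm)" using pm by auto
  have xmy: "snd xm = snd (fst ?Pm)" using pm by auto
  show "fst xm = fst (fst Xi) + tsign d1*r*(sin \<phi>2 - sin (snd Xi)) + s2*cos \<phi>2 + tsign d3*r*(sin h - sin \<phi>2)"
    unfolding xmx arc_x[of r d3 l3a ?P2] straight_x straight_a a2 arc_x[of r d1 l1 Xi]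
    using a2 ah by (simp add: pos_simps \<phi>2_def h_def)
  show "snd xm = snd (fst Xi) - tsign d1*r*(cos \<phi>2 - cos (snd Xi)) + s2* sin \<phi>2 - tsign d3*r*(cos h - cos \<phi>2)"
    unfolding xmy using a2 ah by (simp add: pos_simps \<phi>2_def h_def)
  obtain k :: int where k: "snd ?P5 = snd Xf + 2*pi*k" and pf: "fst ?P5 = fst Xf"
    using ce unfolding conf_eq_def by auto
  have a5: "snd ?P5 = \<phi>4 + tsign d5*l5/r" using a4 by (simp add: pos_simps)
  show "\<exists>k::int. \<phi>4 + tsign d5*l5/r = snd Xf + 2*pi*k" using k a5 by auto
  have sc: "sin (snd ?P5) = sin (snd Xf)" "cos (snd ?P5) = cos (snd Xf)"
    using k sin_cos_eq_iff by metis+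
  have fx: "fst (fst Xf) = fst (fst ?P5)" using pf by simp
  have fy: "snd (fst Xf) = snd (fst ?P5)" using pf by simp
  have p3x: "fst (fst ?P3) = fst xm + tsign d3*r*(sin \<phi>4 - sin h)"
    using ah xmx by (simp add: pos_simps \<phi>4_def h_def algebra_simps)
  have p3y: "snd (fst ?P3) = snd xm - tsign d3*r*(cos \<phi>4 - cos h)"
    using ah xmy by (simp add: pos_simps \<phi>4_def h_def algebra_simps)
  have p3a: "snd ?P3 = \<phi>4" using a4 by (simp add: pos_simps)
  show "fst (fst Xf) = fst xm + tsign d3*r*(sin \<phi>4 - sin h) + s4*cos \<phi>4 + tsign d5*r*(sin (snd Xf) - sin \<phi>4)"
    unfolding fx arc_x[of r d5 l5 ?P4] using sc a5 p3x p3a by (simp add: pos_simps)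
  show "snd (fst Xf) = snd xm - tsign d3*r*(cos \<phi>4 - cos h) + s4* sin \<phi>4 - tsign d5*r*(cos (snd Xf) - cos \<phi>4)"
    unfolding fy arc_y[of r d5 l5 ?P4] using sc a5 p3y p3a by (simp add: pos_simps)
qed

lemma sin_sign: "s = 1 \<or> s = -1 \<Longrightarrow> sin (s * x) = s * sin (x::real)"
  by auto
lemma cos_sign: "s = 1 \<or> s = -1 \<Longrightarrow> cos (s * x) = cos (x::real)"
  by auto

lemma collinear_zero:
  assumes r: "r > 0" and l: "0 \<le> l3a" "0 \<le> l3b" "l3a + l3b < 2*pi*r"
    and C: "S2_S4_collinear r d1 d3 Xi l1 s2 l3a l3b"
  shows "l3a = 0 \<and> l3b = 0"
proof -
  let ?P1 = "arc r d1 l1 Xi" let ?P3 = "arc r d3 l3b (arc r d3 l3a (straight s2 ?P1))"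
  define a2 where "a2 = snd ?P1"
  define lam where "lam = (l3a + l3b) / r"
  define s3 where "s3 = tsign d3"
  have s3: "s3 = 1 \<or> s3 = -1" unfolding s3_def by (rule tsign_cases)
  have a4: "snd ?P3 = a2 + s3 * lam" unfolding a2_def s3_def lam_def by (simp add: pos_simps add_divide_distrib algebra_simps)
  have x3: "fst (fst ?P3) - fst (fst ?P1) = s2 * cos a2 + s3 * r * (sin (a2 + s3 * lam) - sin a2)"
    using a4 unfolding a2_def s3_def by (simp add: pos_simps algebra_simps)
  have y3: "snd (fst ?P3) - snd (fst ?P1) = s2 * sin a2 - s3 * r * (cos (a2 + s3 * lam) - cos a2)"
    using a4 unfolding a2_def s3_def by (simp add: pos_simps algebra_simps)
  have c1: "sin (snd ?P3 - a2) = 0"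
    and c2: "(fst (fst ?P3) - fst (fst ?P1)) * sin a2 - (snd (fst ?P3) - snd (fst ?P1)) * cos a2 = 0"
    using C unfolding S2_S4_collinear_def Let_def a2_def by auto
  have "sin (s3 * lam) = 0" using c1 a4 by simp
  hence "sin lam = 0" using s3 by auto
  then obtain i :: int where i: "lam = of_int i * pi" using sin_zero_iff_int2 by blast
  have l0: "0 \<le> lam" "lam < 2*pi" unfolding lam_def using l r by (auto simp: divide_simps mult.commute)
  have "0 \<le> of_int i * pi" "of_int i * pi < 2 * pi" using l0 i by auto
  hence "0 \<le> real_of_int i" "real_of_int i < 2" using pi_gt_zero by (auto simp: zero_le_mult_iff)
  hence "0 \<le> i" "i < 2" by linarith+
  hence "i = 0 \<or> i = 1" by auto
  moreover have "i \<noteq> 1"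
  proof
    assume "i = 1"
    hence lp: "lam = pi" using i by simp
    have sc: "sin (a2 + s3 * pi) = - sin a2" "cos (a2 + s3 * pi) = - cos a2" using s3 by auto
    have "(fst (fst ?P3) - fst (fst ?P1)) * sin a2 - (snd (fst ?P3) - snd (fst ?P1)) * cos a2 = -2* s3*r*((sin a2)^2 + (cos a2)^2)"
      unfolding x3 y3 lp sc by algebra
    hence "-2* s3*r = 0" using c2 by simp
    then show False using s3 r by auto
  qed
  ultimately have "i = 0" by simp
  hence "l3a + l3b = 0" using i r unfolding lam_def by simp
  then show ?thesis using l by simp
qed

lemma dist_gt:
  fixes p1 p2 :: "real \<times> real"
  assumes r: "r > 0" and s: "s \<ge> 0" and q: "q = 1 \<or> q = -1" and D: "dist p1 p2 \<ge> 4*r"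
    and px: "fst p2 = fst p1 + s * cos b + q*r*A" and py: "snd p2 = snd p1 + s * sin b + q*r*B"
    and AB: "A^2 + B^2 \<le> 4" and X: "\<bar>A * cos b + B * sin b\<bar> \<le> 1"
  shows "s > 2*r"
proof (rule ccontr)
  assume "\<not> s > 2*r"
  hence s2: "s \<le> 2*r" by simp
  have "dist p1 p2 = sqrt ((fst p1 - fst p2)^2 + (snd p1 - snd p2)^2)"
    using dist_Pair_Pair[of "fst p1" "snd p1" "fst p2" "snd p2"] by (simp add: dist_real_def)
  also have "(fst p1 - fst p2)^2 + (snd p1 - snd p2)^2 = s^2 * ((cos b)^2 + (sin b)^2) + (q^2) * r^2 * (A^2 + B^2) + 2*q*r* s*(A * cos b + B * sin b)"
    unfolding px py by algebra
  also have "\<dots> = s^2 + r^2 * (A^2 + B^2) + 2*r* s*(q*(A * cos b + B * sin b))" using q by auto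
  finally have d: "dist p1 p2 = sqrt (s^2 + r^2 * (A^2 + B^2) + 2*r* s*(q*(A * cos b + B * sin b)))" .
  have "q*(A * cos b + B * sin b) \<le> 1" using q X by auto
  hence "2*r* s*(q*(A * cos b + B * sin b)) \<le> 2*r* s*1" using r s by (intro mult_left_mono) auto
  moreover have "r^2 * (A^2 + B^2) \<le> r^2 * 4" using AB by (intro mult_left_mono) auto
  moreover have "s^2 \<le> (2*r)^2" using s s2 by (intro power_mono) auto
  moreover have "2*r* s \<le> 2*r*(2*r)" using s2 r by (intro mult_left_mono) auto
  ultimately have "s^2 + r^2 * (A^2 + B^2) + 2*r* s*(q*(A * cos b + B * sin b)) \<le> (4*r)^2 - 4*r^2"
    by (simp add: power2_eq_square algebra_simps)
  also have "\<dots> < (4*r)^2" using r by simp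
  finally have "dist p1 p2 < sqrt ((4*r)^2)" unfolding d by (intro real_sqrt_less_mono)
  moreover have "sqrt ((4*r)^2) = 4*r" using r by (intro real_sqrt_unique) auto
  ultimately have "dist p1 p2 < 4*r" by simp
  then show False using D by simp
qed

lemma small_int:
  fixes x y r q :: real and j :: int
  assumes r: "r > 0" and q: "q = 1 \<or> q = -1" and x: "0 \<le> x" "x < 2*pi*r" and y: "0 \<le> y" "y < 2*pi*r"
    and e: "x - y = q * r * (2*pi*j)"
  shows "x = y"
proof -
  have "\<bar>x - y\<bar> < 2*pi*r" using x y by auto
  hence "\<bar>q * r * (2*pi*j)\<bar> < 2*pi*r" using e by simp
  hence "r * (2*pi*\<bar>real_of_int j\<bar>) < r * (2*pi)" using q r by (auto simp: abs_mult algebra_simps)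
  hence "2*pi*\<bar>real_of_int j\<bar> < 2*pi" using r by simp
  hence "\<bar>real_of_int j\<bar> < 1" using pi_gt_zero by simp
  hence "j = 0" by linarith
  then show ?thesis using e by simp
qed



theorem lemma3:
  fixes r :: real and Xi Xf :: config and xm :: point and d1 d3 d5 :: turn
    and l1 s2 l3a l3b s4 l5 :: real
  assumes "dubins3_instance r Xi xm Xf"
    and "CSCSC_path r d1 d3 d5 Xi xm Xf l1 s2 l3a l3b s4 l5"
    and "S2_S4_collinear r d1 d3 Xi l1 s2 l3a l3b"
  shows "\<forall>m1 t2 m3a m3b t4 m5.
           CSCSC_path r d1 d3 d5 Xi xm Xf m1 t2 m3a m3b t4 m5 \<longrightarrow>
           CSCSC_length l1 s2 l3a l3b s4 l5 \<le> CSCSC_length m1 t2 m3a m3b t4 m5"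
proof (intro allI impI)
  fix m1 t2 m3a m3b t4 m5
  assume alt: "CSCSC_path r d1 d3 d5 Xi xm Xf m1 t2 m3a m3b t4 m5"
  have r: "r > 0" and dA: "dist (fst Xi) xm \<ge> 4*r" and dB: "dist xm (fst Xf) \<ge> 4*r"
    using assms(1) unfolding dubins3_instance_def by auto
  have gl: "0 \<le> l1" "l1 < 2*pi*r" "0 \<le> s2" "0 \<le> l3a" "0 \<le> l3b" "l3a + l3b < 2*pi*r" "0 \<le> s4" "0 \<le> l5" "l5 < 2*pi*r"
    using assms(2) unfolding CSCSC_path_def by auto
  have al: "0 \<le> m1" "m1 < 2*pi*r" "0 \<le> t2" "0 \<le> m3a" "0 \<le> m3b" "m3a + m3b < 2*pi*r" "0 \<le> t4" "0 \<le> m5" "m5 < 2*pi*r"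
    using alt unfolding CSCSC_path_def by auto
  have z: "l3a = 0" "l3b = 0" using collinear_zero[OF r gl(4,5,6) assms(3)] by auto
  define s1 where "s1 = tsign d1"
  define s3 where "s3 = tsign d3"
  define s5 where "s5 = tsign d5"
  have s1: "s1 = 1 \<or> s1 = -1" unfolding s1_def by (rule tsign_cases)
  have s3: "s3 = 1 \<or> s3 = -1" unfolding s3_def by (rule tsign_cases)
  have s5: "s5 = 1 \<or> s5 = -1" unfolding s5_def by (rule tsign_cases)
  define a0 where "a0 = snd Xi"
  define af where "af = snd Xf"
  define \<theta> where "\<theta> = snd Xi + tsign d1 * l1 / r"
  define \<phi>2 where "\<phi>2 = snd Xi + tsign d1 * m1 / r"
  define h where "h = snd Xi + tsign d1 * m1 / r + tsign d3 * m3a / r"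
  define \<phi>4 where "\<phi>4 = snd Xi + tsign d1 * m1 / r + tsign d3 * m3a / r + tsign d3 * m3b / r"
  note PG = path_eqs[OF assms(2)] and PA = path_eqs[OF alt]
  have G1: "fst xm = fst (fst Xi) + s1*r*(sin \<theta> - sin a0) + s2 * cos \<theta>"
    using PG(1) unfolding z s1_def a0_def \<theta>_def by simp
  have G2: "snd xm = snd (fst Xi) - s1*r*(cos \<theta> - cos a0) + s2 * sin \<theta>"
    using PG(2) unfolding z s1_def a0_def \<theta>_def by simp
  have G3: "fst (fst Xf) = fst xm + s4 * cos \<theta> + s5*r*(sin af - sin \<theta>)"
    using PG(3) unfolding z s5_def af_def \<theta>_def by simp
  have G4: "snd (fst Xf) = snd xm + s4 * sin \<theta> - s5*r*(cos af - cos \<theta>)"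
    using PG(4) unfolding z s5_def af_def \<theta>_def by simp
  obtain k1 :: int where G5: "\<theta> + s5*l5/r = af + 2*pi*k1"
    using PG(5) unfolding z s5_def af_def \<theta>_def by auto
  have A1: "fst xm = fst (fst Xi) + s1*r*(sin \<phi>2 - sin a0) + t2 * cos \<phi>2 + s3*r*(sin h - sin \<phi>2)"
    using PA(1) unfolding s1_def s3_def a0_def \<phi>2_def h_def by simp
  have A2: "snd xm = snd (fst Xi) - s1*r*(cos \<phi>2 - cos a0) + t2 * sin \<phi>2 - s3*r*(cos h - cos \<phi>2)"
    using PA(2) unfolding s1_def s3_def a0_def \<phi>2_def h_def by simp
  have A3: "fst (fst Xf) = fst xm + s3*r*(sin \<phi>4 - sin h) + t4 * cos \<phi>4 + s5*r*(sin af - sin \<phi>4)"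
    using PA(3) unfolding s5_def s3_def af_def \<phi>4_def h_def by simp
  have A4: "snd (fst Xf) = snd xm - s3*r*(cos \<phi>4 - cos h) + t4 * sin \<phi>4 - s5*r*(cos af - cos \<phi>4)"
    using PA(4) unfolding s5_def s3_def af_def \<phi>4_def h_def by simp
  obtain k2 :: int where A5: "\<phi>4 + s5*m5/r = af + 2*pi*k2"
    using PA(5) unfolding s5_def af_def \<phi>4_def by auto
  have w2: "s2 > 2*r"
  proof (rule dist_gt[OF r gl(3) s1 dA])
    show "fst xm = fst (fst Xi) + s2 * cos \<theta> + s1*r*(sin \<theta> - sin a0)" using G1 by simp
    show "snd xm = snd (fst Xi) + s2 * sin \<theta> + s1*r*(-(cos \<theta> - cos a0))" using G2 by (simp add: algebra_simps)
    have "(sin \<theta> - sin a0)^2 + (-(cos \<theta> - cos a0))^2 = 2 - 2*cos (\<theta> - a0)"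
      unfolding cos_diff using sin_cos_squared_add[of \<theta>] sin_cos_squared_add[of a0] by algebra
    then show "(sin \<theta> - sin a0)^2 + (-(cos \<theta> - cos a0))^2 \<le> 4" using cos_ge_minus_one[of "\<theta> - a0"] by linarith
    have "(sin \<theta> - sin a0) * cos \<theta> + (-(cos \<theta> - cos a0)) * sin \<theta> = sin (\<theta> - a0)"
      unfolding sin_diff by algebra
    then show "\<bar>(sin \<theta> - sin a0) * cos \<theta> + (-(cos \<theta> - cos a0)) * sin \<theta>\<bar> \<le> 1" using abs_sin_le_one by simp
  qed
  have w4: "s4 > 2*r"
  proof (rule dist_gt[OF r gl(7) s5 dB])
    show "fst (fst Xf) = fst xm + s4 * cos \<theta> + s5*r*(sin af - sin \<theta>)" using G3 by simp
    show "snd (fst Xf) = snd xm + s4 * sin \<theta> + s5*r*(-(cos af - cos \<theta>))" using G4 by (simp add: algebra_simps)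
    have "(sin af - sin \<theta>)^2 + (-(cos af - cos \<theta>))^2 = 2 - 2*cos (af - \<theta>)"
      unfolding cos_diff using sin_cos_squared_add[of \<theta>] sin_cos_squared_add[of af] by algebra
    then show "(sin af - sin \<theta>)^2 + (-(cos af - cos \<theta>))^2 \<le> 4" using cos_ge_minus_one[of "af - \<theta>"] by linarith
    have "(sin af - sin \<theta>) * cos \<theta> + (-(cos af - cos \<theta>)) * sin \<theta> = sin (af - \<theta>)"
      unfolding sin_diff by algebra
    then show "\<bar>(sin af - sin \<theta>) * cos \<theta> + (-(cos af - cos \<theta>)) * sin \<theta>\<bar> \<le> 1" using abs_sin_le_one by simp
  qed
  have Sx: "s1*r* sin \<theta> + s2 * cos \<theta> = s1*r* sin \<phi>2 + t2 * cos \<phi>2 + s3*r*(sin h - sin \<phi>2)"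
    using G1 A1 by algebra
  have Sy: "- s1*r*cos \<theta> + s2 * sin \<theta> = - s1*r*cos \<phi>2 + t2 * sin \<phi>2 - s3*r*(cos h - cos \<phi>2)"
    using G2 A2 by algebra
  have Tx: "s4 * cos \<theta> - s5*r* sin \<theta> = s3*r*(sin \<phi>4 - sin h) + t4 * cos \<phi>4 - s5*r* sin \<phi>4"
    using G3 A3 by algebra
  have Ty: "s4 * sin \<theta> + s5*r*cos \<theta> = - s3*r*(cos \<phi>4 - cos h) + t4 * sin \<phi>4 + s5*r*cos \<phi>4"
    using G4 A4 by algebra
  define \<alpha> where "\<alpha> = m3a / r"
  define \<beta> where "\<beta> = m3b / r"
  define \<eta> where "\<eta> = h - \<theta>"
  have h\<phi>2: "\<phi>2 = h - s3 * \<alpha>" unfolding h_def \<phi>2_def s3_def \<alpha>_def by simp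
  have h\<phi>4: "\<phi>4 = h + s3 * \<beta>" unfolding h_def \<phi>4_def s3_def \<beta>_def by simp
  have h\<theta>: "\<theta> = h - \<eta>" unfolding \<eta>_def by simp
  have s\<theta>: "sin \<theta> = sin h * cos \<eta> - cos h * sin \<eta>" and c\<theta>: "cos \<theta> = cos h * cos \<eta> + sin h * sin \<eta>"
    unfolding h\<theta> by (simp_all add: sin_diff cos_diff)
  have s\<phi>2: "sin \<phi>2 = sin h * cos \<alpha> - s3 * cos h * sin \<alpha>" and c\<phi>2: "cos \<phi>2 = cos h * cos \<alpha> + s3 * sin h * sin \<alpha>"
    unfolding h\<phi>2 sin_diff cos_diff sin_sign[OF s3] cos_sign[OF s3] by simp_all
  have s\<phi>4: "sin \<phi>4 = sin h * cos \<beta> + s3 * cos h * sin \<beta>" and c\<phi>4: "cos \<phi>4 = cos h * cos \<beta> - s3 * sin h * sin \<beta>"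
    unfolding h\<phi>4 sin_add cos_add sin_sign[OF s3] cos_sign[OF s3] by simp_all
  have s3sq: "s3 * s3 = 1" using s3 by auto
  have hh: "sin h * sin h + cos h * cos h = 1" using sin_cos_squared_add3[of h] by (simp add: algebra_simps)
  have Sx': "s1*r*(sin h * cos \<eta> - cos h * sin \<eta>) + s2 * (cos h * cos \<eta> + sin h * sin \<eta>)
     = s1*r*(sin h * cos \<alpha> - s3 * cos h * sin \<alpha>) + t2 * (cos h * cos \<alpha> + s3 * sin h * sin \<alpha>)
       + s3*r*(sin h - (sin h * cos \<alpha> - s3 * cos h * sin \<alpha>))"
    using Sx unfolding s\<theta> c\<theta> s\<phi>2 c\<phi>2 .
  have Sy': "- s1*r*(cos h * cos \<eta> + sin h * sin \<eta>) + s2 * (sin h * cos \<eta> - cos h * sin \<eta>)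
     = - s1*r*(cos h * cos \<alpha> + s3 * sin h * sin \<alpha>) + t2 * (sin h * cos \<alpha> - s3 * cos h * sin \<alpha>)
       - s3*r*(cos h - (cos h * cos \<alpha> + s3 * sin h * sin \<alpha>))"
    using Sy unfolding s\<theta> c\<theta> s\<phi>2 c\<phi>2 .
  have E1: "t2 * sin \<alpha> - (1 - s1* s3)*r*cos \<alpha> = s2*(s3* sin \<eta>) - r + (s1* s3)*r*cos \<eta>"
    using Sx' Sy' s3sq hh by algebra
  have E2: "t2 * cos \<alpha> + (1 - s1* s3)*r* sin \<alpha> = s2*cos \<eta> - (s1* s3)*r*(s3* sin \<eta>)"
    using Sx' Sy' s3sq hh by algebra
  have Tx': "s4 * (cos h * cos \<eta> + sin h * sin \<eta>) - s5*r*(sin h * cos \<eta> - cos h * sin \<eta>)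
     = s3*r*((sin h * cos \<beta> + s3 * cos h * sin \<beta>) - sin h) + t4 * (cos h * cos \<beta> - s3 * sin h * sin \<beta>)
       - s5*r*(sin h * cos \<beta> + s3 * cos h * sin \<beta>)"
    using Tx unfolding s\<theta> c\<theta> s\<phi>4 c\<phi>4 .
  have Ty': "s4 * (sin h * cos \<eta> - cos h * sin \<eta>) + s5*r*(cos h * cos \<eta> + sin h * sin \<eta>)
     = - s3*r*((cos h * cos \<beta> - s3 * sin h * sin \<beta>) - cos h) + t4 * (sin h * cos \<beta> + s3 * cos h * sin \<beta>)
       + s5*r*(cos h * cos \<beta> - s3 * sin h * sin \<beta>)"
    using Ty unfolding s\<theta> c\<theta> s\<phi>4 c\<phi>4 .
  have E3: "t4 * sin \<beta> - (1 - s5* s3)*r*cos \<beta> = s4*(-(s3* sin \<eta>)) - r + (s5* s3)*r*cos \<eta>"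
    using Tx' Ty' s3sq hh by algebra
  have E4: "t4 * cos \<beta> + (1 - s5* s3)*r* sin \<beta> = s4*cos \<eta> - (s5* s3)*r*(-(s3* sin \<eta>))"
    using Tx' Ty' s3sq hh by algebra
  have u: "(s3* sin \<eta>)^2 + (cos \<eta>)^2 = 1" using s3 by auto
  have u': "(-(s3* sin \<eta>))^2 + (cos \<eta>)^2 = 1" using s3 by auto
  have p1: "s1* s3 = 1 \<or> s1* s3 = -1" using s1 s3 by auto
  have p5: "s5* s3 = 1 \<or> s5* s3 = -1" using s5 s3 by auto
  have vA: "(sin \<alpha>)^2 + (cos \<alpha>)^2 = 1" and vB: "(sin \<beta>)^2 + (cos \<beta>)^2 = 1" by simp_all
  note CA = core[OF r w2 al(3) u vA p1 E1 E2]
  note CB = core[OF r w4 al(7) u' vB p5 E3 E4]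
  obtain \<eta>' where e0: "0 \<le> \<eta>'" and e1: "\<eta>' < 2*pi" and ec: "cos \<eta> = cos \<eta>'" and es: "s3* sin \<eta> = sin \<eta>'"
    using sincos_total_2pi[of "cos \<eta>" "s3* sin \<eta>"] u by (auto simp: add.commute)
  have a0': "0 \<le> \<alpha>" "0 \<le> \<beta>" "\<alpha> + \<beta> < 2*pi"
    using al(4,5,6) r unfolding \<alpha>_def \<beta>_def by (auto simp: divide_simps add_divide_distrib[symmetric] mult.commute)
  have "\<eta>' = 0"
  proof (rule angle_final[OF a0' e0 e1])
    show "0 \<le> sin (\<alpha> - \<eta>')" using CA(1) unfolding sin_diff ec[symmetric] es[symmetric] by simp
    show "0 \<le> sin (\<beta> + \<eta>')" using CB(1) unfolding sin_add ec[symmetric] es[symmetric] by simp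
    show "sin \<alpha> < 0" if "sin \<eta>' < 0" using CA(3) that es by simp
    show "sin \<beta> < 0" if "sin \<eta>' > 0" using CB(3) that es by simp
    show "0 < sin (\<alpha> - \<eta>') \<and> 0 < sin (\<beta> + \<eta>')" if "cos \<eta>' = -1"
      using CA(2) CB(2) that unfolding sin_diff sin_add ec[symmetric] es[symmetric] by simp
  qed
  hence sig0: "s3 * sin \<eta> = 0" and c1: "cos \<eta> = 1" using ec es by auto
  have fA: "sin \<alpha> = 0 \<and> cos \<alpha> = 1 \<and> t2 = s2" using CA(4)[OF sig0 c1] .
  have fB: "sin \<beta> = 0 \<and> cos \<beta> = 1 \<and> t4 = s4" using CB(4) sig0 c1 by simp
  have zero_of: "x = 0" if zc: "cos x = 1" "0 \<le> x" "x < 2*pi" for x :: real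
  proof -
    obtain n :: int where n: "x = real_of_int n * 2 * pi"
      using cos_one_2pi_int[THEN iffD1, OF zc(1)] by (elim exE)
    have "0 \<le> real_of_int n * (2 * pi)" "real_of_int n * (2*pi) < 1 * (2*pi)" using zc(2,3) n by (simp_all add: mult.assoc)
    hence "0 \<le> real_of_int n" "real_of_int n < 1" using pi_gt_zero
      by (simp_all add: zero_le_mult_iff mult_less_cancel_right)
    hence "n = 0" by linarith
    then show ?thesis using n by simp
  qed
  have "\<alpha> = 0" using zero_of fA a0' by (smt (verit))
  hence m3a0: "m3a = 0" using r unfolding \<alpha>_def by simp
  have "\<beta> = 0" using zero_of fB a0' by (smt (verit))
  hence m3b0: "m3b = 0" using r unfolding \<beta>_def by simp
  obtain n :: int where n: "\<eta> = real_of_int n * 2 * pi"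
    using cos_one_2pi_int[THEN iffD1, OF c1] by (elim exE)
  have "\<phi>2 = \<theta> + 2*pi*n" using h\<phi>2 \<open>\<alpha> = 0\<close> n unfolding \<eta>_def by (simp add: algebra_simps)
  hence "m1 - l1 = s1 * r * (2*pi*n)"
    unfolding \<phi>2_def \<theta>_def s1_def[symmetric] using r s1 by (auto simp: field_simps)
  hence m1e: "m1 = l1" using small_int[OF r s1 al(1,2) gl(1,2)] by blast
  have "\<phi>4 = \<theta> + 2*pi*n" using h\<phi>4 \<open>\<beta> = 0\<close> n unfolding \<eta>_def by (simp add: algebra_simps)
  hence "m5 - l5 = s5 * r * (2*pi*(k2 - k1 - n))"
    using G5 A5 r s5 by (auto simp: field_simps)
  hence m5e: "m5 = l5" using small_int[OF r s5 al(8,9) gl(8,9)] by blast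
  show "CSCSC_length l1 s2 l3a l3b s4 l5 \<le> CSCSC_length m1 t2 m3a m3b t4 m5"
    unfolding CSCSC_length_def using m1e m5e fA fB m3a0 m3b0 z by simp
qed


end
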